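(* Let $R$ be a Noetherian integral domain. If every ideal of $R[X]$ is power stable, then $R$ is a field.
   Context: An ideal $I$ of the polynomial ring $R[X]$ over an integral domain $R$ is called power stable if $I^t\cap R = (I\cap R)^t$ for all integers $t\geq 1$. *)

theory Defs
  imports "HOL-Algebra.Ring_Divisibility" "HOL-Algebra.Polynomials" "HOL-Algebra.Ideal_Product"
begin

definition ideal_pow :: "('a, 'b) ring_scheme \<Rightarrow> 'a set \<Rightarrow> nat \<Rightarrow> 'a set" where
  "ideal_pow R I n = ((ideal_prod R I) ^^ n) (carrier R)"

definition contraction :: "('a, 'b) ring_scheme \<Rightarrow> 'a list set \<Rightarrow> 'a set" where
  "contraction R I = {a \<in> carrier R. ring.poly_of_const R a \<in> I}"

definition power_stable :: "('a, 'b) ring_scheme \<Rightarrow> 'a list set \<Rightarrow> bool" where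
  "power_stable R I \<longleftrightarrow>
     (\<forall>t::nat. t \<ge> 1 \<longrightarrow>
        contraction R (ideal_pow (univ_poly R (carrier R)) I t) = ideal_pow R (contraction R I) t)"

end

theory Submission
  imports Defs
begin

context domain begin
lemma hom: "poly_of_const \<in> ring_hom R (carrier R [X])"
  using canonical_embedding_is_hom[OF carrier_is_subring] by simp
lemma ct_const: "k \<in> carrier R \<Longrightarrow> const_term (poly_of_const k) = k"
  by (auto simp: poly_of_const_def const_term_def)
lemma ct_X: "const_term X = \<zero>"
  by (simp add: var_def const_term_def)
lemma ct: 
  shows "\<And>p. p \<in> carrier (carrier R [X]) \<Longrightarrow> const_term p \<in> carrier R"
    and "\<And>p q. \<lbrakk> p \<in> carrier (carrier R [X]); q \<in> carrier (carrier R [X]) \<rbrakk> \<Longrightarrow>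
                 const_term (p \<otimes>\<^bsub>carrier R [X]\<^esub> q) = const_term p \<otimes> const_term q"
    and "\<And>p q. \<lbrakk> p \<in> carrier (carrier R [X]); q \<in> carrier (carrier R [X]) \<rbrakk> \<Longrightarrow>
                 const_term (p \<oplus>\<^bsub>carrier R [X]\<^esub> q) = const_term p \<oplus> const_term q"
    and "\<And>p. p \<in> carrier (carrier R [X]) \<Longrightarrow> const_term (\<ominus>\<^bsub>carrier R [X]\<^esub> p) = \<ominus> (const_term p)"
  using const_term_simprules_shell[OF carrier_is_subring] by auto

lemma decomp:
  assumes p: "p \<in> carrier (carrier R [X])"
  shows "\<exists>q\<in>carrier (carrier R [X]). p = poly_of_const (const_term p) \<oplus>\<^bsub>carrier R [X]\<^esub> (X \<otimes>\<^bsub>carrier R [X]\<^esub> q)"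
proof -
  let ?P = "carrier R [X]"
  interpret P: domain ?P by (rule univ_poly_is_domain[OF carrier_is_subring])
  have Xc: "X \<in> carrier ?P" using var_closed(1)[OF carrier_is_subring] .
  have k: "const_term p \<in> carrier R" using ct(1)[OF p] .
  have ck: "poly_of_const (const_term p) \<in> carrier ?P" using hom k by (simp add: ring_hom_closed)
  define r where "r = p \<ominus>\<^bsub>?P\<^esub> poly_of_const (const_term p)"
  have rc: "r \<in> carrier ?P" unfolding r_def using p ck by simp
  have r0: "const_term r = \<zero>" unfolding r_def a_minus_def
    using ct(3,4) p ck ct_const[OF k] k by (simp add: r_neg)
  have "\<exists>q\<in>carrier ?P. r = X \<otimes>\<^bsub>?P\<^esub> q"
  proof (cases "r = []")
    case True thus ?thesis using Xc by (intro bexI[of _ "[]"]) (use P.r_null[OF Xc] in \<open>auto simp: univ_poly_zero\<close>)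
  next
    case False
    have "polynomial (carrier R) r" using rc by (simp add: univ_poly_carrier)
    then obtain r' where r': "polynomial (carrier R) r'" "r' \<noteq> []" "r = r' @ [\<zero>]"
      using const_term_zero[OF carrier_is_subring _ False r0] by blast
    have r'c: "r' \<in> carrier ?P" using r'(1) by (simp add: univ_poly_carrier)
    have "r' \<otimes>\<^bsub>?P\<^esub> X = r" using poly_mult_var[OF carrier_is_subring r'c] r' by simp
    thus ?thesis using r'c Xc P.m_comm by metis
  qed
  then obtain q where q: "q \<in> carrier ?P" "r = X \<otimes>\<^bsub>?P\<^esub> q" by blast
  have "p = poly_of_const (const_term p) \<oplus>\<^bsub>?P\<^esub> r" unfolding r_def using p ck by algebra
  thus ?thesis using q by blast
qed

lemma key:
  assumes a: "a \<in> carrier R" "a \<noteq> \<zero>" and x: "x \<in> carrier R"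
    and f: "f \<in> carrier (carrier R [X])" and g: "g \<in> carrier (carrier R [X])"
    and eq: "poly_of_const x = f \<otimes>\<^bsub>carrier R [X]\<^esub> (X \<otimes>\<^bsub>carrier R [X]\<^esub> X \<ominus>\<^bsub>carrier R [X]\<^esub> poly_of_const a)
        \<oplus>\<^bsub>carrier R [X]\<^esub> g \<otimes>\<^bsub>carrier R [X]\<^esub> (poly_of_const a \<otimes>\<^bsub>carrier R [X]\<^esub> X)"
  shows "\<exists>r\<in>carrier R. x = a \<otimes> a \<otimes> r"
proof -
  let ?P = "carrier R [X]"
  let ?C = poly_of_const
  interpret P: domain ?P by (rule univ_poly_is_domain[OF carrier_is_subring])
  have Xc: "X \<in> carrier ?P" using var_closed(1)[OF carrier_is_subring] .
  have X0: "X \<noteq> \<zero>\<^bsub>?P\<^esub>" by (simp add: var_def univ_poly_zero)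
  have Cc: "\<And>k. k \<in> carrier R \<Longrightarrow> ?C k \<in> carrier ?P" using hom by (simp add: ring_hom_closed)
  have Cm: "\<And>k l. k \<in> carrier R \<Longrightarrow> l \<in> carrier R \<Longrightarrow> ?C (k \<otimes> l) = ?C k \<otimes>\<^bsub>?P\<^esub> ?C l"
    using hom by (simp add: ring_hom_mult)
  have Ci: "\<And>k. k \<in> carrier R \<Longrightarrow> ?C (\<ominus> k) = \<ominus>\<^bsub>?P\<^esub> ?C k"
  proof -
    fix k assume k: "k \<in> carrier R"
    interpret Ch: ring_hom_ring R ?P ?C
      using canonical_embedding_ring_hom[OF carrier_is_subring] by simp
    show "?C (\<ominus> k) = \<ominus>\<^bsub>?P\<^esub> ?C k" using k by simp
  qed
  obtain f' where f': "f' \<in> carrier ?P" "f = ?C (const_term f) \<oplus>\<^bsub>?P\<^esub> X \<otimes>\<^bsub>?P\<^esub> f'"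
    using decomp[OF f] by blast
  obtain f'' where f'': "f'' \<in> carrier ?P" "f' = ?C (const_term f') \<oplus>\<^bsub>?P\<^esub> X \<otimes>\<^bsub>?P\<^esub> f''"
    using decomp[OF f'(1)] by blast
  obtain g' where g': "g' \<in> carrier ?P" "g = ?C (const_term g) \<oplus>\<^bsub>?P\<^esub> X \<otimes>\<^bsub>?P\<^esub> g'"
    using decomp[OF g] by blast
  define f0 where "f0 = const_term f"
  define f1 where "f1 = const_term f'"
  define g0 where "g0 = const_term g"
  have f0c: "f0 \<in> carrier R" and f1c: "f1 \<in> carrier R" and g0c: "g0 \<in> carrier R"
    using ct(1) f f'(1) g unfolding f0_def f1_def g0_def by auto
  have h1c: "const_term f'' \<in> carrier R" and h2c: "const_term g' \<in> carrier R"
    using ct(1) f''(1) g'(1) by auto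
  have fe: "f = ?C f0 \<oplus>\<^bsub>?P\<^esub> X \<otimes>\<^bsub>?P\<^esub> (?C f1 \<oplus>\<^bsub>?P\<^esub> X \<otimes>\<^bsub>?P\<^esub> f'')"
    using f'(2) f''(2) unfolding f0_def f1_def by simp
  have ge: "g = ?C g0 \<oplus>\<^bsub>?P\<^esub> X \<otimes>\<^bsub>?P\<^esub> g'" using g'(2) unfolding g0_def by simp
  have "const_term (?C x) = x" using ct_const[OF x] .
  also have "const_term (?C x) = \<ominus> (f0 \<otimes> a)"
    unfolding eq unfolding a_minus_def fe ge
    using Xc Cc[OF a(1)] Cc[OF f0c] Cc[OF f1c] Cc[OF g0c] f''(1) g'(1) a(1) f0c f1c g0c h1c h2c
    by (simp add: ct ct_X ct_const r_minus)
  finally have xe: "x = \<ominus> (f0 \<otimes> a)" by simp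

  define u where "u = X \<otimes>\<^bsub>?P\<^esub> X \<ominus>\<^bsub>?P\<^esub> ?C a"
  have uc: "u \<in> carrier ?P" unfolding u_def using Xc Cc[OF a(1)] by simp
  define E where "E = ?C f0 \<otimes>\<^bsub>?P\<^esub> X \<oplus>\<^bsub>?P\<^esub> ?C f1 \<otimes>\<^bsub>?P\<^esub> u
     \<oplus>\<^bsub>?P\<^esub> f'' \<otimes>\<^bsub>?P\<^esub> X \<otimes>\<^bsub>?P\<^esub> u \<oplus>\<^bsub>?P\<^esub> ?C g0 \<otimes>\<^bsub>?P\<^esub> ?C a
     \<oplus>\<^bsub>?P\<^esub> X \<otimes>\<^bsub>?P\<^esub> g' \<otimes>\<^bsub>?P\<^esub> ?C a"
  have Ec: "E \<in> carrier ?P" unfolding E_def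
    using Xc uc Cc[OF a(1)] Cc[OF f0c] Cc[OF f1c] Cc[OF g0c] f''(1) g'(1) by simp
  have Cx: "?C x = \<ominus>\<^bsub>?P\<^esub> (?C f0 \<otimes>\<^bsub>?P\<^esub> ?C a)"
    using xe Ci Cm a(1) f0c by simp
  have "X \<otimes>\<^bsub>?P\<^esub> E = f \<otimes>\<^bsub>?P\<^esub> u \<oplus>\<^bsub>?P\<^esub> g \<otimes>\<^bsub>?P\<^esub> (?C a \<otimes>\<^bsub>?P\<^esub> X) \<ominus>\<^bsub>?P\<^esub> ?C x"
    unfolding fe ge Cx E_def u_def
    using Xc Cc[OF a(1)] Cc[OF f0c] Cc[OF f1c] Cc[OF g0c] f''(1) g'(1) by algebra
  also have "\<dots> = \<zero>\<^bsub>?P\<^esub>" using eq[folded u_def] Cc[OF x] by simp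
  finally have E0: "E = \<zero>\<^bsub>?P\<^esub>" using P.integral[OF _ Xc Ec] X0 by blast
  have "const_term E = g0 \<otimes> a \<ominus> f1 \<otimes> a"
    unfolding E_def u_def a_minus_def
    using Xc Cc[OF a(1)] Cc[OF f0c] Cc[OF f1c] Cc[OF g0c] f''(1) g'(1) a(1) f0c f1c g0c h1c h2c
    by (simp add: ct ct_X ct_const r_minus a_minus_def a_comm)
  moreover have "const_term E = \<zero>" using E0 by (simp add: const_term_def univ_poly_zero)
  ultimately have "g0 \<otimes> a \<ominus> f1 \<otimes> a = \<zero>" by simp
  moreover have "(g0 \<ominus> f1) \<otimes> a = g0 \<otimes> a \<ominus> f1 \<otimes> a" using a(1) f1c g0c by algebra
  ultimately have "(g0 \<ominus> f1) \<otimes> a = \<zero>" by simp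
  hence "g0 \<ominus> f1 = \<zero>" using a f1c g0c integral by blast
  moreover have "g0 = (g0 \<ominus> f1) \<oplus> f1" using f1c g0c by algebra
  ultimately have g0f1: "g0 = f1" using f1c by simp
  define F where "F = ?C f0 \<oplus>\<^bsub>?P\<^esub> ?C f1 \<otimes>\<^bsub>?P\<^esub> X
     \<oplus>\<^bsub>?P\<^esub> f'' \<otimes>\<^bsub>?P\<^esub> u \<oplus>\<^bsub>?P\<^esub> g' \<otimes>\<^bsub>?P\<^esub> ?C a"
  have Fc: "F \<in> carrier ?P" unfolding F_def
    using Xc uc Cc[OF a(1)] Cc[OF f0c] Cc[OF f1c] f''(1) g'(1) by simp
  have "X \<otimes>\<^bsub>?P\<^esub> F = E"
    unfolding E_def F_def u_def g0f1
    using Xc Cc[OF a(1)] Cc[OF f0c] Cc[OF f1c] f''(1) g'(1) by algebra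
  hence F0: "F = \<zero>\<^bsub>?P\<^esub>" using E0 P.integral[OF _ Xc Fc] X0 by blast
  have "const_term F = f0 \<ominus> const_term f'' \<otimes> a \<oplus> const_term g' \<otimes> a"
    unfolding F_def u_def a_minus_def
    using Xc Cc[OF a(1)] Cc[OF f0c] Cc[OF f1c] f''(1) g'(1) a(1) f0c f1c h1c h2c
    by (simp add: ct ct_X ct_const r_minus a_minus_def)
  moreover have "const_term F = \<zero>" using F0 by (simp add: const_term_def univ_poly_zero)
  ultimately have e0: "f0 \<ominus> const_term f'' \<otimes> a \<oplus> const_term g' \<otimes> a = \<zero>" by metis
  have "f0 = (f0 \<ominus> const_term f'' \<otimes> a \<oplus> const_term g' \<otimes> a) \<oplus> const_term f'' \<otimes> a \<ominus> const_term g' \<otimes> a"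
    using a(1) f0c h1c h2c by algebra
  hence f0e: "f0 = \<zero> \<oplus> const_term f'' \<otimes> a \<ominus> const_term g' \<otimes> a" unfolding e0 .
  have "x = a \<otimes> a \<otimes> (const_term g' \<ominus> const_term f'')"
    unfolding xe f0e using a(1) f0c h1c h2c by algebra
  thus ?thesis using h1c h2c by blast
qed

lemma prod_sub:
  assumes "p \<in> carrier R" "q \<in> carrier R" "J \<subseteq> PIdl p" "K \<subseteq> PIdl q"
  shows "J \<cdot> K \<subseteq> PIdl (p \<otimes> q)"
proof
  fix s assume "s \<in> J \<cdot> K" thus "s \<in> PIdl (p \<otimes> q)"
  proof (induct s rule: ideal_prod.induct)
    case (prod i j)
    then obtain x y where "x \<in> carrier R" "y \<in> carrier R" "i = x \<otimes> p" "j = y \<otimes> q"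
      using assms(3,4) unfolding cgenideal_def by blast
    moreover have "(x \<otimes> p) \<otimes> (y \<otimes> q) = (x \<otimes> y) \<otimes> (p \<otimes> q)" if "x \<in> carrier R" "y \<in> carrier R"
      using that assms(1,2) by algebra
    ultimately show ?case unfolding cgenideal_def by auto
  next
    case (sum s1 s2)
    thus ?case using cgenideal_ideal[of "p \<otimes> q"] assms(1,2)
      by (simp add: additive_subgroup.a_closed ideal.axioms(1))
  qed
qed

lemma main:
  assumes st: "\<forall>I. ideal I (carrier R [X]) \<longrightarrow> power_stable R I"
  shows "field R"
proof (rule ccontr)
  assume nf: "\<not> field R"
  have "\<exists>a. a \<in> carrier R \<and> a \<noteq> \<zero> \<and> a \<notin> Units R"
  proof (rule ccontr)
    assume "\<not> ?thesis"
    hence "field R" by (intro field_intro2) (use one_not_zero in auto)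
    thus False using nf by blast
  qed
  then obtain a where a: "a \<in> carrier R" "a \<noteq> \<zero>" "a \<notin> Units R" by blast
  let ?P = "carrier R [X]"
  let ?C = poly_of_const
  interpret P: domain ?P by (rule univ_poly_is_domain[OF carrier_is_subring])
  have Xc: "X \<in> carrier ?P" using var_closed(1)[OF carrier_is_subring] .
  have Cc: "\<And>k. k \<in> carrier R \<Longrightarrow> ?C k \<in> carrier ?P" using hom by (simp add: ring_hom_closed)
  have Cm: "\<And>k l. k \<in> carrier R \<Longrightarrow> l \<in> carrier R \<Longrightarrow> ?C (k \<otimes> l) = ?C k \<otimes>\<^bsub>?P\<^esub> ?C l"
    using hom by (simp add: ring_hom_mult)
  define u where "u = X \<otimes>\<^bsub>?P\<^esub> X \<ominus>\<^bsub>?P\<^esub> ?C a"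
  define v where "v = ?C a \<otimes>\<^bsub>?P\<^esub> X"
  have uc: "u \<in> carrier ?P" and vc: "v \<in> carrier ?P" unfolding u_def v_def using Xc Cc[OF a(1)] by auto
  define I where "I = PIdl\<^bsub>?P\<^esub> u <+>\<^bsub>?P\<^esub> PIdl\<^bsub>?P\<^esub> v"
  have Iu: "ideal (PIdl\<^bsub>?P\<^esub> u) ?P" and Iv: "ideal (PIdl\<^bsub>?P\<^esub> v) ?P"
    using P.cgenideal_ideal uc vc by auto
  have I: "ideal I ?P" unfolding I_def using P.add_ideals[OF Iu Iv] .
  have sa: "\<And>h k A B. h \<in> A \<Longrightarrow> k \<in> B \<Longrightarrow> h \<oplus>\<^bsub>?P\<^esub> k \<in> A <+>\<^bsub>?P\<^esub> B"
    by (auto simp: set_add_def')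
  have uI: "u \<in> I" unfolding I_def
    using sa[OF P.cgenideal_self[OF uc] additive_subgroup.zero_closed[OF ideal.axioms(1)[OF Iv]]] uc
    by simp
  have vI: "v \<in> I" unfolding I_def
    using sa[OF additive_subgroup.zero_closed[OF ideal.axioms(1)[OF Iu]] P.cgenideal_self[OF vc]] vc
    by simp
  have pw: "ideal_pow ?P I 2 = I \<cdot>\<^bsub>?P\<^esub> I"
    unfolding ideal_pow_def by (simp add: numeral_2_eq_2 P.ideal_prod_one[OF I])
  have a3: "a \<otimes> a \<otimes> a \<in> contraction R (ideal_pow ?P I 2)"
  proof -
    have e: "?C (a \<otimes> a \<otimes> a) = v \<otimes>\<^bsub>?P\<^esub> v \<oplus>\<^bsub>?P\<^esub> (\<ominus>\<^bsub>?P\<^esub> X \<otimes>\<^bsub>?P\<^esub> u) \<otimes>\<^bsub>?P\<^esub> v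
             \<oplus>\<^bsub>?P\<^esub> (?C a \<otimes>\<^bsub>?P\<^esub> u) \<otimes>\<^bsub>?P\<^esub> u"
      unfolding Cm[OF m_closed[OF a(1) a(1)] a(1)] Cm[OF a(1) a(1)] u_def v_def
      using Xc Cc[OF a(1)] by algebra
    have m1: "\<ominus>\<^bsub>?P\<^esub> X \<otimes>\<^bsub>?P\<^esub> u \<in> I" using ideal.I_l_closed[OF I uI] Xc by simp
    have m2: "?C a \<otimes>\<^bsub>?P\<^esub> u \<in> I" using ideal.I_l_closed[OF I uI] Cc[OF a(1)] by simp
    have "?C (a \<otimes> a \<otimes> a) \<in> I \<cdot>\<^bsub>?P\<^esub> I" unfolding e
      by (intro ideal_prod.sum ideal_prod.prod vI uI m1 m2)
    thus ?thesis unfolding pw contraction_def using a(1) by simp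
  qed
  have J: "contraction R I \<subseteq> PIdl (a \<otimes> a)"
  proof
    fix x assume "x \<in> contraction R I"
    hence x: "x \<in> carrier R" "?C x \<in> I" unfolding contraction_def by auto
    then obtain h k where hk: "h \<in> PIdl\<^bsub>?P\<^esub> u" "k \<in> PIdl\<^bsub>?P\<^esub> v" "?C x = h \<oplus>\<^bsub>?P\<^esub> k"
      unfolding I_def set_add_def' by blast
    then obtain f g where "f \<in> carrier ?P" "g \<in> carrier ?P" "h = f \<otimes>\<^bsub>?P\<^esub> u" "k = g \<otimes>\<^bsub>?P\<^esub> v"
      unfolding cgenideal_def by blast
    then obtain r where r: "r \<in> carrier R" "x = a \<otimes> a \<otimes> r"
      using key[OF a(1,2) x(1)] hk(3) unfolding u_def v_def by blast
    thus "x \<in> PIdl (a \<otimes> a)" unfolding cgenideal_def using a(1) m_comm by auto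
  qed
  have "carrier R \<subseteq> PIdl \<one>" unfolding cgenideal_def by (auto intro: r_one[symmetric])
  hence "contraction R I \<cdot> carrier R \<subseteq> PIdl (a \<otimes> a \<otimes> \<one>)"
    by (rule prod_sub[OF m_closed[OF a(1) a(1)] one_closed J])
  hence "contraction R I \<cdot> (contraction R I \<cdot> carrier R) \<subseteq> PIdl ((a \<otimes> a) \<otimes> (a \<otimes> a \<otimes> \<one>))"
    by (rule prod_sub[OF m_closed[OF a(1) a(1)] m_closed[OF m_closed[OF a(1) a(1)] one_closed] J])
  moreover have "ideal_pow R (contraction R I) 2 = contraction R I \<cdot> (contraction R I \<cdot> carrier R)"
    unfolding ideal_pow_def by (simp add: numeral_2_eq_2)
  moreover have "contraction R (ideal_pow ?P I 2) = ideal_pow R (contraction R I) 2"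
    using st I unfolding power_stable_def by auto
  ultimately have "a \<otimes> a \<otimes> a \<in> PIdl ((a \<otimes> a) \<otimes> (a \<otimes> a \<otimes> \<one>))" using a3 by auto
  then obtain y where y: "y \<in> carrier R" "a \<otimes> a \<otimes> a = y \<otimes> ((a \<otimes> a) \<otimes> (a \<otimes> a \<otimes> \<one>))"
    unfolding cgenideal_def by blast
  have a3c: "a \<otimes> a \<otimes> a \<in> carrier R" using a(1) by simp
  have "(a \<otimes> a \<otimes> a) \<otimes> (y \<otimes> a) = y \<otimes> ((a \<otimes> a) \<otimes> (a \<otimes> a \<otimes> \<one>))" using a(1) y(1) by algebra
  also have "\<dots> = (a \<otimes> a \<otimes> a) \<otimes> \<one>" using y(2) a3c by simp
  finally have eq1: "(a \<otimes> a \<otimes> a) \<otimes> (y \<otimes> a) = (a \<otimes> a \<otimes> a) \<otimes> \<one>" .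
  have a3n: "a \<otimes> a \<otimes> a \<noteq> \<zero>" using a(1,2) by (simp add: integral_iff)
  have "y \<otimes> a = \<one>" using m_lcancel[OF a3n a3c m_closed[OF y(1) a(1)] one_closed] eq1 by simp
  moreover have "a \<otimes> y = y \<otimes> a" using a(1) y(1) m_comm by simp
  ultimately have "a \<in> Units R" unfolding Units_def using a(1) y(1) by auto
  thus False using a(3) by blast
qed
end

theorem theorem3p14:
  fixes R :: "('a, 'b) ring_scheme"
  assumes "noetherian_domain R"
    and "\<forall>I. ideal I (univ_poly R (carrier R)) \<longrightarrow> power_stable R I"
  shows "field R"
proof -
  interpret domain R using assms(1) by (simp add: noetherian_domain_def)
  show ?thesis using main assms(2) by blast
qed

end
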